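(* For every $k\ge1$, $G_k\cong\mathrm{Syl}_2 A_{2^k}$, the Sylow $2$-subgroup of the alternating group $A_{2^k}$.
   Context: Let $C_2=\{e,\sigma\}$ with $\sigma=(1,2)$ acting on $X=\{1,2\}$. Define $B_1=C_2$ and $B_k=B_{k-1}\wr C_2$ for $k>1$, with elements written as wreath recursions $(g_1,g_2)\pi$, $g_1,g_2\in B_{k-1}$, $\pi\in C_2$, and multiplication $(g_1,g_2)\pi\cdot(h_1,h_2)\rho=(g_1h_{\pi(1)},g_2h_{\pi(2)})\pi\rho$; $B_k$ acts faithfully on the set $X^k$ of words of length $k$ (of size $2^k$). Define $G_1=\{e\}$ and, for $k>1$, $G_k=\{(g_1,g_2)\pi\in B_k : g_1g_2\in G_{k-1}\}$. *)

theory Defs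
  imports "HOL-Algebra.Sym_Groups" "HOL-Computational_Algebra.Primes"
begin

(* Elements of the iterated wreath products, written as wreath recursions.
   WLeaf b  : element of B_1 = C_2 (b = True means sigma = (1,2)).
   WNode g1 g2 b : the wreath recursion (g1,g2)pi, pi = sigma iff b. *)
datatype wr = WLeaf bool | WNode wr wr bool

(* pi(1) = 2 iff pi = sigma; multiplication
   (g1,g2)pi * (h1,h2)rho = (g1 h_{pi(1)}, g2 h_{pi(2)}) pi rho *)
fun wmult :: "wr \<Rightarrow> wr \<Rightarrow> wr" where
  "wmult (WLeaf a) (WLeaf b) = WLeaf (a \<noteq> b)"
| "wmult (WNode g1 g2 p) (WNode h1 h2 r) =
     WNode (wmult g1 (if p then h2 else h1)) (wmult g2 (if p then h1 else h2)) (p \<noteq> r)"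
| "wmult _ _ = WLeaf False"

fun wone :: "nat \<Rightarrow> wr" where
  "wone 0 = WLeaf False"
| "wone (Suc 0) = WLeaf False"
| "wone (Suc (Suc k)) = WNode (wone (Suc k)) (wone (Suc k)) False"

fun Bset :: "nat \<Rightarrow> wr set" where
  "Bset 0 = {}"
| "Bset (Suc 0) = range WLeaf"
| "Bset (Suc (Suc k)) = {WNode g1 g2 p | g1 g2 p. g1 \<in> Bset (Suc k) \<and> g2 \<in> Bset (Suc k)}"

fun Gset :: "nat \<Rightarrow> wr set" where
  "Gset 0 = {}"
| "Gset (Suc 0) = {WLeaf False}"
| "Gset (Suc (Suc k)) = {WNode g1 g2 p | g1 g2 p. g1 \<in> Bset (Suc k) \<and> g2 \<in> Bset (Suc k)
                                             \<and> wmult g1 g2 \<in> Gset (Suc k)}"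

definition Bgrp :: "nat \<Rightarrow> wr monoid" where
  "Bgrp k = \<lparr>carrier = Bset k, mult = wmult, one = wone k\<rparr>"

definition Ggrp :: "nat \<Rightarrow> wr monoid" where
  "Ggrp k = \<lparr>carrier = Gset k, mult = wmult, one = wone k\<rparr>"

definition sylow_subgroup :: "nat \<Rightarrow> 'a set \<Rightarrow> ('a, 'b) monoid_scheme \<Rightarrow> bool" where
  "sylow_subgroup p H G \<longleftrightarrow> subgroup H G \<and> card H = p ^ multiplicity p (order G)"

end

theory Submission
  imports Defs
begin


definition extf :: "(nat \<Rightarrow> nat) \<Rightarrow> (nat \<Rightarrow> nat) \<Rightarrow> (nat \<Rightarrow> nat) \<Rightarrow> nat \<Rightarrow> nat" where
  "extf f g q n = (if n \<in> range f then f (q (g n)) else n)"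

lemma extf_comp:
  assumes gf: "\<And>x. g (f x) = x"
  shows "extf f g (q \<circ> r) = extf f g q \<circ> extf f g r"
  by (auto simp: fun_eq_iff extf_def gf)

lemma extf_id:
  assumes gf: "\<And>x. g (f x) = x"
  shows "extf f g id = id"
  by (auto simp: fun_eq_iff extf_def gf)

lemma extf_transpose:
  assumes gf: "\<And>x. g (f x) = x"
  shows "extf f g (transpose a b) = transpose (f a) (f b)"
proof -
  have inj: "f x = f y \<Longrightarrow> x = y" for x y by (metis gf)
  show ?thesis
    by (auto simp: fun_eq_iff extf_def gf transpose_def dest: inj)
qed

lemma extf_perm:
  assumes gf: "\<And>x. g (f x) = x" and p: "q permutes S" and fin: "finite S"
  shows "extf f g q permutes f ` S \<and> evenperm (extf f g q) = evenperm q"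
  using p fin
proof (induct q rule: permutes_induct)
  case id
  then show ?case using extf_id[where f=f and g=g, OF gf] permutes_id evenperm_id by metis
next
  case (swap a b p)
  have inj: "f x = f y \<Longrightarrow> x = y" for x y by (metis gf)
  have e: "extf f g (transpose a b \<circ> p) = transpose (f a) (f b) \<circ> extf f g p"
    by (simp add: extf_comp[where f=f and g=g, OF gf] extf_transpose[where f=f and g=g, OF gf])
  have pf: "extf f g p permutes f ` S" using swap by simp
  have t: "transpose (f a) (f b) permutes f ` S" using swap by (intro permutes_swap_id) auto
  have fab: "f a \<noteq> f b" using swap inj by blast
  have perm1: "permutation (extf f g p)" using pf fin permutation_permutes by blast
  have perm2: "permutation p" using swap fin permutation_permutes by blast
  have ev: "evenperm (transpose (f a) (f b) \<circ> extf f g p) = evenperm (transpose a b \<circ> p)"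
    using evenperm_comp[OF permutation_swap_id perm1] evenperm_comp[OF permutation_swap_id perm2]
      evenperm_swap fab swap by metis
  show ?case unfolding e using permutes_compose[OF pf t] ev by blast
qed

definition flip :: "nat \<Rightarrow> nat \<Rightarrow> nat" where
  "flip n i = (if i < 2 * n then (if even i then i + 1 else i - 1) else i)"

lemma flip_Suc: "flip (Suc n) = transpose (2*n) (2*n+1) \<circ> flip n"
  by (auto simp: fun_eq_iff flip_def transpose_def) presburger+

lemma flip_perm: "flip n permutes {0..<2*n} \<and> evenperm (flip n) = even n"
proof (induct n)
  case 0
  have "flip 0 = id" by (auto simp: fun_eq_iff flip_def)
  then show ?case using permutes_id evenperm_id by (metis even_zero)
next
  case (Suc n)
  have pf: "flip n permutes {0..<2*Suc n}" using Suc permutes_subset by fastforce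
  have t: "transpose (2*n) (2*n+1) permutes {0..<2*Suc n}" by (intro permutes_swap_id) auto
  have perm1: "permutation (flip n)" using Suc permutation_permutes by blast
  have ev: "evenperm (transpose (2*n) (2*n+1) \<circ> flip n) = even (Suc n)"
    using evenperm_comp[OF permutation_swap_id perm1, of "2*n" "2*n+1"] Suc by (simp add: evenperm_swap)
  show ?case unfolding flip_Suc using permutes_compose[OF pf t] ev by blast
qed


fun act :: "wr \<Rightarrow> nat \<Rightarrow> nat" where
  "act (WLeaf b) n = (if b \<and> n < 2 then 1 - n else n)"
| "act (WNode g1 g2 p) n = (if odd n = p then 2 * act g1 (n div 2) else 2 * act g2 (n div 2) + 1)"

fun winv :: "wr \<Rightarrow> wr" where
  "winv (WLeaf b) = WLeaf b"
| "winv (WNode g1 g2 p) = WNode (winv (if p then g2 else g1)) (winv (if p then g1 else g2)) p"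

definition pm :: "nat \<Rightarrow> wr \<Rightarrow> nat \<Rightarrow> nat" where
  "pm k g i = (if i < 2 ^ k then act g i else i)"

lemma Bset_SS: "g \<in> Bset (Suc (Suc k)) \<longleftrightarrow> (\<exists>g1 g2 p. g = WNode g1 g2 p \<and> g1 \<in> Bset (Suc k) \<and> g2 \<in> Bset (Suc k))"
  by auto

lemma Bset_1: "g \<in> Bset (Suc 0) \<longleftrightarrow> (\<exists>b. g = WLeaf b)"
  by auto

lemma act_bound: "g \<in> Bset (Suc k) \<Longrightarrow> m < 2 ^ Suc k \<Longrightarrow> act g m < 2 ^ Suc k"
proof (induct k arbitrary: g m)
  case 0 then show ?case by auto
next
  case (Suc k)
  then obtain g1 g2 p where g: "g = WNode g1 g2 p" "g1 \<in> Bset (Suc k)" "g2 \<in> Bset (Suc k)" by auto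
  have "m div 2 < 2 ^ Suc k" using Suc.prems by auto
  then have "act g1 (m div 2) < 2 ^ Suc k" "act g2 (m div 2) < 2 ^ Suc k" using Suc.hyps g by auto
  then show ?case using g by auto
qed

lemma wmult_closed: "g \<in> Bset (Suc k) \<Longrightarrow> h \<in> Bset (Suc k) \<Longrightarrow> wmult g h \<in> Bset (Suc k)"
  by (induct k arbitrary: g h) auto

lemma winv_closed: "g \<in> Bset (Suc k) \<Longrightarrow> winv g \<in> Bset (Suc k)"
  by (induct k arbitrary: g) auto

lemma wone_closed: "wone (Suc k) \<in> Bset (Suc k)"
  by (induct k) auto

lemma wmult_winv: "g \<in> Bset (Suc k) \<Longrightarrow> wmult g (winv g) = wone (Suc k) \<and> wmult (winv g) g = wone (Suc k)"
  by (induct k arbitrary: g) auto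

lemma wmult_wone: "g \<in> Bset (Suc k) \<Longrightarrow> wmult g (wone (Suc k)) = g"
  by (induct k arbitrary: g) auto

lemma act_wone: "act (wone (Suc k)) m = m"
proof (induct k arbitrary: m)
  case 0 then show ?case by simp
next
  case (Suc k) then show ?case by simp
qed

lemma act_mult: "g \<in> Bset (Suc k) \<Longrightarrow> h \<in> Bset (Suc k) \<Longrightarrow> m < 2 ^ Suc k \<Longrightarrow>
   act (wmult g h) m = act g (act h m)"
proof (induct k arbitrary: g h m)
  case 0 then show ?case by auto
next
  case (Suc k)
  then obtain g1 g2 p where g: "g = WNode g1 g2 p" "g1 \<in> Bset (Suc k)" "g2 \<in> Bset (Suc k)" by auto
  from Suc obtain h1 h2 r where h: "h = WNode h1 h2 r" "h1 \<in> Bset (Suc k)" "h2 \<in> Bset (Suc k)" by auto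
  have md: "m div 2 < 2 ^ Suc k" using Suc.prems by auto
  note IH = Suc.hyps[OF _ _ md]
  show ?case using g h IH by auto
qed


definition E0 where "E0 = extf (\<lambda>m. 2 * m) (\<lambda>n. n div 2)"
definition E1 where "E1 = extf (\<lambda>m. 2 * m + 1) (\<lambda>n. n div 2)"

lemma E0_apply: "E0 q n = (if even n then 2 * q (n div 2) else n)"
  by (auto simp: E0_def extf_def elim!: evenE)

lemma E1_apply: "E1 q n = (if odd n then 2 * q (n div 2) + 1 else n)"
  by (auto simp: E1_def extf_def elim!: oddE)

lemma pm_node:
  assumes "g1 \<in> Bset (Suc k)" "g2 \<in> Bset (Suc k)"
  shows "pm (Suc (Suc k)) (WNode g1 g2 p) = E0 (pm (Suc k) g1) \<circ> E1 (pm (Suc k) g2) \<circ> (if p then flip (2 ^ Suc k) else id)"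
proof
  fix i
  show "pm (Suc (Suc k)) (WNode g1 g2 p) i = (E0 (pm (Suc k) g1) \<circ> E1 (pm (Suc k) g2) \<circ> (if p then flip (2 ^ Suc k) else id)) i"
  proof (cases "i < 2 ^ Suc (Suc k)")
    case True
    then have d: "i div 2 < 2 ^ Suc k" by auto
    have a1: "act g1 (i div 2) < 2 ^ Suc k" "act g2 (i div 2) < 2 ^ Suc k"
      using act_bound assms d by auto
    have fl: "flip (2 ^ Suc k) i div 2 = i div 2" "odd (flip (2 ^ Suc k) i) = even i"
      using True by (auto simp: flip_def) presburger+
    have fl2: "flip (2 ^ Suc k) i < 2 ^ Suc (Suc k)" using True by (auto simp: flip_def)
    show ?thesis using True d a1 fl fl2
      by (auto simp: pm_def E0_apply E1_apply)
  next
    case False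
    then have d: "\<not> i div 2 < 2 ^ Suc k" by auto
    have "flip (2 ^ Suc k) i = i" using False by (auto simp: flip_def)
    then show ?thesis using False d by (auto simp: pm_def E0_apply E1_apply)
  qed
qed

lemma pm_leaf: "pm (Suc 0) (WLeaf b) = (if b then transpose 0 1 else id)"
  by (auto simp: fun_eq_iff pm_def transpose_def)

lemma pm_perm: "g \<in> Bset (Suc k) \<Longrightarrow> pm (Suc k) g permutes {0..<2 ^ Suc k}"
proof (induct k arbitrary: g)
  case 0
  then obtain b where "g = WLeaf b" by auto
  then show ?case by (auto simp: pm_leaf permutes_id intro!: permutes_swap_id)
next
  case (Suc k)
  then obtain g1 g2 p where g: "g = WNode g1 g2 p" "g1 \<in> Bset (Suc k)" "g2 \<in> Bset (Suc k)" by auto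
  have p1: "E0 (pm (Suc k) g1) permutes {0..<2 ^ Suc (Suc k)}"
    unfolding E0_def
    by (rule permutes_subset[OF conjunct1[OF extf_perm[OF _ Suc.hyps[OF g(2)]]]]) auto
  have p2: "E1 (pm (Suc k) g2) permutes {0..<2 ^ Suc (Suc k)}"
    unfolding E1_def
    by (rule permutes_subset[OF conjunct1[OF extf_perm[OF _ Suc.hyps[OF g(3)]]]]) auto
  have p3: "(if p then flip (2 ^ Suc k) else id) permutes {0..<2 ^ Suc (Suc k)}"
    using flip_perm[of "2 ^ Suc k"] by (auto simp: permutes_id)
  show ?case unfolding g pm_node[OF g(2,3)]
    by (intro permutes_compose p1 p2 p3)
qed


lemma pm_mult: "g \<in> Bset (Suc k) \<Longrightarrow> h \<in> Bset (Suc k) \<Longrightarrow> pm (Suc k) (wmult g h) = pm (Suc k) g \<circ> pm (Suc k) h"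
proof
  fix x
  assume g: "g \<in> Bset (Suc k)" and h: "h \<in> Bset (Suc k)"
  show "pm (Suc k) (wmult g h) x = (pm (Suc k) g \<circ> pm (Suc k) h) x"
    using act_bound[OF h, of x] by (auto simp: pm_def act_mult[OF g h])
qed

lemma pm_one: "pm (Suc k) (wone (Suc k)) = id"
  by (auto simp: fun_eq_iff pm_def act_wone)

lemma act_inj: "g \<in> Bset (Suc k) \<Longrightarrow> h \<in> Bset (Suc k) \<Longrightarrow> (\<forall>m < 2 ^ Suc k. act g m = act h m) \<Longrightarrow> g = h"
proof (induct k arbitrary: g h)
  case 0
  then obtain a b where "g = WLeaf a" "h = WLeaf b" by auto
  then show ?case using 0 by (cases a; cases b) force+
next
  case (Suc k)
  then obtain g1 g2 p where g: "g = WNode g1 g2 p" "g1 \<in> Bset (Suc k)" "g2 \<in> Bset (Suc k)" by auto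
  from Suc obtain h1 h2 r where h: "h = WNode h1 h2 r" "h1 \<in> Bset (Suc k)" "h2 \<in> Bset (Suc k)" by auto
  have "act g 0 = act h 0" using Suc.prems by simp
  moreover have "even (act g 0) = (\<not> p)" using g by simp
  moreover have "even (act h 0) = (\<not> r)" using h by simp
  ultimately have pr: "p = r" by simp
  have e1: "act g1 m = act h1 m" if "m < 2 ^ Suc k" for m
  proof -
    define n where "n = (if p then 2 * m + 1 else 2 * m)"
    have "n < 2 ^ Suc (Suc k)" "odd n = p" "n div 2 = m" using that by (auto simp: n_def)
    then show ?thesis using Suc.prems(3) g h pr by fastforce
  qed
  have e2: "act g2 m = act h2 m" if "m < 2 ^ Suc k" for m
  proof -
    define n where "n = (if p then 2 * m else 2 * m + 1)"
    have "n < 2 ^ Suc (Suc k)" "odd n \<noteq> p" "n div 2 = m" using that by (auto simp: n_def)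
    then show ?thesis using Suc.prems(3) g h pr by fastforce
  qed
  show ?case using Suc.hyps[OF g(2) h(2)] Suc.hyps[OF g(3) h(3)] e1 e2 g h pr by auto
qed

lemma pm_inj: "g \<in> Bset (Suc k) \<Longrightarrow> h \<in> Bset (Suc k) \<Longrightarrow> pm (Suc k) g = pm (Suc k) h \<Longrightarrow> g = h"
proof (rule act_inj, assumption+, intro allI impI)
  fix m :: nat assume "pm (Suc k) g = pm (Suc k) h" "m < 2 ^ Suc k"
  then show "act g m = act h m" unfolding pm_def by (metis (full_types))
qed

lemma pm_permutation: "g \<in> Bset (Suc k) \<Longrightarrow> permutation (pm (Suc k) g)"
  using pm_perm permutation_permutes by blast

lemma Gset_char: "g \<in> Gset (Suc k) \<longleftrightarrow> g \<in> Bset (Suc k) \<and> evenperm (pm (Suc k) g)"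
proof (induct k arbitrary: g)
  case 0
  show ?case by (cases g) (auto simp: pm_leaf evenperm_swap)
next
  case (Suc k)
  show ?case
  proof (cases "g \<in> Bset (Suc (Suc k))")
    case False
    then show ?thesis by auto
  next
    case True
    then obtain g1 g2 p where g: "g = WNode g1 g2 p" "g1 \<in> Bset (Suc k)" "g2 \<in> Bset (Suc k)" by auto
    have p1: "E0 (pm (Suc k) g1) permutes E0_set" and ev1: "evenperm (E0 (pm (Suc k) g1)) = evenperm (pm (Suc k) g1)"
      if "E0_set = (\<lambda>m. 2 * m) ` {0..<2 ^ Suc k}" for E0_set
      using extf_perm[OF _ pm_perm[OF g(2)], of "\<lambda>n. n div 2" "\<lambda>m. 2 * m"] that unfolding E0_def by auto
    have p2: "E1 (pm (Suc k) g2) permutes E1_set" and ev2: "evenperm (E1 (pm (Suc k) g2)) = evenperm (pm (Suc k) g2)"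
      if "E1_set = (\<lambda>m. 2 * m + 1) ` {0..<2 ^ Suc k}" for E1_set
      using extf_perm[OF _ pm_perm[OF g(3)], of "\<lambda>n. n div 2" "\<lambda>m. 2 * m + 1"] that unfolding E1_def by auto
    have q1: "permutation (E0 (pm (Suc k) g1))" using p1 permutation_permutes by blast
    have q2: "permutation (E1 (pm (Suc k) g2))" using p2 permutation_permutes by blast
    have q3: "permutation (if p then flip (2 ^ Suc k) else id)"
      using flip_perm[of "2 ^ Suc k"] permutation_permutes permutation_id by (metis finite_atLeastLessThan)
    have ev3: "evenperm (if p then flip (2 ^ Suc k) else id)"
      using flip_perm[of "2 ^ Suc k"] by auto
    have "evenperm (pm (Suc (Suc k)) g) = (evenperm (pm (Suc k) g1) = evenperm (pm (Suc k) g2))"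
      unfolding g(1) pm_node[OF g(2,3)] comp_assoc
      using evenperm_comp[OF q1 permutation_compose[OF q2 q3]] evenperm_comp[OF q2 q3] ev1 ev2 ev3
      by blast
    also have "\<dots> = evenperm (pm (Suc k) (wmult g1 g2))"
      using pm_mult[OF g(2,3)] evenperm_comp[OF pm_permutation[OF g(2)] pm_permutation[OF g(3)]] by simp
    finally show ?thesis using Suc[of "wmult g1 g2"] g wmult_closed[OF g(2,3)] by auto
  qed
qed


lemma Bset_finite_card: "finite (Bset (Suc k)) \<and> card (Bset (Suc k)) = 2 ^ (2 ^ Suc k - 1)"
proof (induct k)
  case 0
  have "Bset (Suc 0) = WLeaf ` UNIV" by simp
  moreover have "card (WLeaf ` (UNIV :: bool set)) = 2" by (subst card_image) (auto simp: inj_on_def)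
  ultimately show ?case by simp
next
  case (Suc k)
  let ?B = "Bset (Suc k)"
  have e: "Bset (Suc (Suc k)) = (\<lambda>(g1, g2, p). WNode g1 g2 p) ` (?B \<times> ?B \<times> UNIV)"
    by (auto simp: image_iff)
  have i: "inj_on (\<lambda>(g1, g2, p). WNode g1 g2 p) (?B \<times> ?B \<times> UNIV)" by (auto simp: inj_on_def)
  have c: "card (Bset (Suc (Suc k))) = card ?B * card ?B * 2"
    unfolding e card_image[OF i] by (simp add: card_cartesian_product)
  have fin: "finite (Bset (Suc (Suc k)))" unfolding e using Suc by simp
  have "card (Bset (Suc (Suc k))) = (2::nat) ^ (2 ^ Suc k - 1) * 2 ^ (2 ^ Suc k - 1) * 2"
    using c Suc by simp
  also have "\<dots> = 2 ^ ((2 ^ Suc k - 1) + (2 ^ Suc k - 1) + 1)"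
    by (simp only: power_add power_one_right)
  also have "((2::nat) ^ Suc k - 1) + (2 ^ Suc k - 1) + 1 = 2 ^ Suc (Suc k) - 1"
  proof -
    have "1 \<le> (2::nat) ^ k" by simp
    then show ?thesis by (simp only: power_Suc)
  qed
  finally have X: "card (Bset (Suc (Suc k))) = 2 ^ (2 ^ Suc (Suc k) - 1)" .
  show ?case using fin X by blast
qed

fun wodd :: "nat \<Rightarrow> wr" where
  "wodd 0 = WLeaf True"
| "wodd (Suc k) = WNode (wodd k) (wone (Suc k)) False"

lemma wodd: "wodd k \<in> Bset (Suc k) \<and> wodd k \<notin> Gset (Suc k)"
proof (induct k)
  case 0 then show ?case by auto
next
  case (Suc k) then show ?case using wone_closed[of k] wmult_wone[of "wodd k" k] by auto
qed

lemma Gset_sub: "Gset (Suc k) \<subseteq> Bset (Suc k)"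
  using Gset_char by blast

lemma lmult_inj:
  assumes t: "t \<in> Bset (Suc k)"
  shows "inj_on (wmult t) (Bset (Suc k))"
proof (rule inj_onI)
  fix g h assume g: "g \<in> Bset (Suc k)" and h: "h \<in> Bset (Suc k)" and e: "wmult t g = wmult t h"
  have "pm (Suc k) t \<circ> pm (Suc k) g = pm (Suc k) t \<circ> pm (Suc k) h"
    using e pm_mult[OF t g] pm_mult[OF t h] by simp
  then have "pm (Suc k) g = pm (Suc k) h"
    using permutes_inj[OF pm_perm[OF t]] by (auto simp: fun_eq_iff inj_on_def)
  then show "g = h" using pm_inj g h by blast
qed

lemma Gset_card: "card (Gset (Suc k)) = 2 ^ (2 ^ Suc k - 2)"
proof -
  let ?B = "Bset (Suc k)" and ?G = "Gset (Suc k)" and ?t = "wodd k"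
  have t: "?t \<in> ?B" "\<not> evenperm (pm (Suc k) ?t)" using wodd Gset_char by blast+
  have fB: "finite ?B" using Bset_finite_card by blast
  have i: "inj_on (wmult ?t) ?B" using lmult_inj[OF t(1)] .
  have par: "g \<in> ?B \<Longrightarrow> (wmult ?t g \<in> ?G) = (\<not> (g \<in> ?G))" for g
    using Gset_char pm_mult[OF t(1)] evenperm_comp[OF pm_permutation[OF t(1)] pm_permutation] t
      wmult_closed[OF t(1)] by metis
  have c1: "card ?G \<le> card (?B - ?G)"
    by (rule card_inj_on_le[where f="wmult ?t"]) (use i Gset_sub par wmult_closed[OF t(1)] fB in \<open>auto intro: inj_on_subset\<close>)
  have c2: "card (?B - ?G) \<le> card ?G"
    by (rule card_inj_on_le[where f="wmult ?t"]) (use i Gset_sub par wmult_closed[OF t(1)] fB in \<open>auto intro: inj_on_subset finite_subset\<close>)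
  have "card ?B = card ?G + card (?B - ?G)"
    using card_Diff_subset[OF finite_subset[OF Gset_sub fB] Gset_sub] card_mono[OF fB Gset_sub] by simp
  then have "card ?B = 2 * card ?G" using c1 c2 by simp
  then have "2 * card ?G = 2 ^ (2 ^ Suc k - 1)" using Bset_finite_card by simp
  also have "(2::nat) ^ (2 ^ Suc k - 1) = 2 * 2 ^ (2 ^ Suc k - 2)"
  proof -
    have "(2::nat) ^ Suc k - 1 = Suc (2 ^ Suc k - 2)" using one_less_power[of "2::nat" "Suc k"] by simp
    then show ?thesis by simp
  qed
  finally show ?thesis by simp
qed


lemma fact_double: "(fact (2 * n) :: nat) = 2 ^ n * fact n * (\<Prod>i<n. 2 * i + 1)"
proof (induct n)
  case 0 then show ?case by simp
next
  case (Suc n)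
  have "(fact (2 * Suc n) :: nat) = (2 * n + 2) * (2 * n + 1) * fact (2 * n)"
    by (simp add: algebra_simps)
  also have "\<dots> = 2 ^ Suc n * fact (Suc n) * (\<Prod>i<Suc n. 2 * i + 1)"
    unfolding Suc by (simp add: algebra_simps)
  finally show ?case .
qed

lemma odd_prod: "odd (\<Prod>i<n. 2 * i + 1 :: nat)"
  by (induct n) auto

lemma mult_fact: "multiplicity (2::nat) (fact (2 ^ k)) = 2 ^ k - 1"
proof (induct k)
  case 0 then show ?case by simp
next
  case (Suc k)
  have p: "prime_elem (2::nat)" by simp
  have nz: "(\<Prod>i<2^k. 2 * i + 1 :: nat) \<noteq> 0" using odd_prod by (metis odd_pos not_gr0)
  have "multiplicity (2::nat) (fact (2 ^ Suc k)) = multiplicity 2 (2 ^ 2 ^ k * fact (2 ^ k) * (\<Prod>i<2^k. 2 * i + 1 :: nat))"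
    using fact_double[of "2 ^ k"] by simp
  also have "\<dots> = 2 ^ k + (2 ^ k - 1) + 0"
    using prime_elem_multiplicity_mult_distrib[OF p] nz Suc odd_prod[of "2^k"]
    by (simp add: not_dvd_imp_multiplicity_0)
  also have "\<dots> = 2 ^ Suc k - 1" using one_le_power[of "2::nat" k] by simp
  finally show ?case .
qed




definition phi :: "nat \<Rightarrow> wr \<Rightarrow> nat \<Rightarrow> nat" where
  "phi k g = extf Suc (\<lambda>n. n - 1) (pm k g)"

lemma phi_perm: "g \<in> Bset (Suc k) \<Longrightarrow> phi (Suc k) g permutes {1..2 ^ Suc k} \<and> evenperm (phi (Suc k) g) = evenperm (pm (Suc k) g)"
proof -
  assume g: "g \<in> Bset (Suc k)"
  have "Suc ` {0..<2 ^ Suc k} = {1..2 ^ Suc k}"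
    by (simp add: atLeastLessThanSuc_atLeastAtMost image_Suc_atLeastLessThan)
  then show ?thesis using extf_perm[OF _ pm_perm[OF g], of "\<lambda>n. n - 1" Suc] unfolding phi_def by auto
qed

lemma phi_mult: "g \<in> Bset (Suc k) \<Longrightarrow> h \<in> Bset (Suc k) \<Longrightarrow> phi (Suc k) (wmult g h) = phi (Suc k) g \<circ> phi (Suc k) h"
  unfolding phi_def using pm_mult extf_comp[of "\<lambda>n. n - 1" Suc] by simp

lemma phi_inj: "g \<in> Bset (Suc k) \<Longrightarrow> h \<in> Bset (Suc k) \<Longrightarrow> phi (Suc k) g = phi (Suc k) h \<Longrightarrow> g = h"
proof -
  assume g: "g \<in> Bset (Suc k)" and h: "h \<in> Bset (Suc k)" and e: "phi (Suc k) g = phi (Suc k) h"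
  have "pm (Suc k) g m = pm (Suc k) h m" for m
    using fun_cong[OF e, of "Suc m"] unfolding phi_def extf_def by auto
  then show "g = h" using pm_inj[OF g h] by blast
qed

lemma winv_G: "g \<in> Gset (Suc k) \<Longrightarrow> winv g \<in> Gset (Suc k)"
proof -
  assume gG: "g \<in> Gset (Suc k)"
  then have g: "g \<in> Bset (Suc k)" using Gset_sub by blast
  have wi: "winv g \<in> Bset (Suc k)" using winv_closed[OF g] .
  have "pm (Suc k) (winv g) \<circ> pm (Suc k) g = id"
    using pm_mult[OF wi g] wmult_winv[OF g] pm_one by metis
  then have "evenperm (pm (Suc k) (winv g)) = evenperm (pm (Suc k) g)"
    using evenperm_comp[OF pm_permutation[OF wi] pm_permutation[OF g]] evenperm_id by metis
  then show ?thesis using gG Gset_char wi by blast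
qed

theorem mainTheorem13:
  fixes k :: nat
  assumes "k \<ge> 1"
  shows "\<exists>H. sylow_subgroup 2 H (alt_group (2 ^ k))
             \<and> Ggrp k \<cong> (alt_group (2 ^ k))\<lparr>carrier := H\<rparr>"
proof -
  obtain j where k: "k = Suc j" using assms by (cases k) auto
  define H where "H = phi k ` Gset k"
  have GB: "g \<in> Gset k \<Longrightarrow> g \<in> Bset k" for g using Gset_sub[of j] k by blast
  have Hsub: "H \<subseteq> carrier (alt_group (2 ^ k))"
  proof
    fix a assume "a \<in> H"
    then obtain g where g: "g \<in> Gset (Suc j)" "a = phi (Suc j) g" unfolding H_def k by blast
    have gB: "g \<in> Bset (Suc j)" using g(1) Gset_char by blast
    have "evenperm (pm (Suc j) g)" using g(1) Gset_char by blast
    then show "a \<in> carrier (alt_group (2 ^ k))"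
      unfolding alt_group_carrier g(2) k using phi_perm[OF gB] by simp
  qed
  have mult: "phi k g \<circ> phi k h = phi k (wmult g h)" if "g \<in> Gset k" "h \<in> Gset k" for g h
    using phi_mult[of g j h] GB[OF that(1)] GB[OF that(2)] k by simp
  have multG: "wmult g h \<in> Gset k" if "g \<in> Gset k" "h \<in> Gset k" for g h
  proof -
    have gB: "g \<in> Bset (Suc j)" "h \<in> Bset (Suc j)" using GB that k by auto
    have e: "evenperm (pm (Suc j) g)" "evenperm (pm (Suc j) h)" using that Gset_char k by auto
    have "evenperm (pm (Suc j) (wmult g h))"
      unfolding pm_mult[OF gB] using evenperm_comp[OF pm_permutation[OF gB(1)] pm_permutation[OF gB(2)]] e by simp
    then show ?thesis using wmult_closed[OF gB] Gset_char k by simp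
  qed
  have invH: "inv\<^bsub>alt_group (2 ^ k)\<^esub> a \<in> H" if aH: "a \<in> H" for a
  proof -
    obtain g where g: "g \<in> Gset k" "a = phi k g" using aH H_def by auto
    have gB: "g \<in> Bset (Suc j)" using GB g k by blast
    have wi: "winv g \<in> Bset (Suc j)" using winv_closed gB by blast
    have o: "phi (Suc j) (wone (Suc j)) = id"
      unfolding phi_def pm_one by (rule extf_id) simp
    have "phi k g \<circ> phi k (winv g) = id" "phi k (winv g) \<circ> phi k g = id"
      unfolding k using phi_mult[OF gB wi] phi_mult[OF wi gB] wmult_winv[OF gB] o by simp_all
    then have "inv' a = phi k (winv g)" using inv_unique_comp g by blast
    moreover have "a \<in> carrier (alt_group (2 ^ k))" using Hsub aH by blast
    moreover have "winv g \<in> Gset k" using winv_G g k by blast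
    ultimately show ?thesis using alt_group_inv_equality H_def by auto
  qed
  have sg: "subgroup H (alt_group (2 ^ k))"
  proof (rule group.subgroupI[OF alt_group_is_group Hsub])
    have "wone (Suc j) \<in> Gset (Suc j)" using wone_closed[of j] pm_one[of j] Gset_char by simp
    then show "H \<noteq> {}" unfolding H_def k by blast
    show "inv\<^bsub>alt_group (2 ^ k)\<^esub> a \<in> H" if "a \<in> H" for a using invH that .
    show "a \<otimes>\<^bsub>alt_group (2 ^ k)\<^esub> b \<in> H" if ab: "a \<in> H" "b \<in> H" for a b
    proof -
      obtain g h where "g \<in> Gset k" "h \<in> Gset k" "a = phi k g" "b = phi k h" using ab H_def by auto
      then show ?thesis unfolding alt_group_mult H_def using mult multG by auto
    qed
  qed
  have injG: "inj_on (phi k) (Gset k)"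
  proof (rule inj_onI)
    fix g h assume "g \<in> Gset k" "h \<in> Gset k" "phi k g = phi k h"
    then show "g = h" using phi_inj[of g j h] GB k by blast
  qed
  have cardH: "card H = 2 ^ (2 ^ k - 2)" unfolding H_def card_image[OF injG] using Gset_card k by simp
  have ord: "2 * order (alt_group (2 ^ k)) = fact (2 ^ k)"
  proof -
    have "2 \<le> (2::nat) ^ k" using k by simp
    then show ?thesis unfolding order_def using alt_group_card_carrier[of "2 ^ k"] by simp
  qed
  have "multiplicity (2::nat) (order (alt_group (2 ^ k))) = 2 ^ k - 2"
  proof -
    have nz: "order (alt_group (2 ^ k)) \<noteq> 0" using ord by (metis fact_nonzero mult_0_right)
    have "multiplicity (2::nat) (2 * order (alt_group (2 ^ k))) = Suc (multiplicity 2 (order (alt_group (2 ^ k))))"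
      by (rule multiplicity_times_same) (use nz in auto)
    then show ?thesis using mult_fact[of k] ord by simp
  qed
  then have syl: "sylow_subgroup 2 H (alt_group (2 ^ k))"
    unfolding sylow_subgroup_def using sg cardH by simp
  have hom: "phi k \<in> hom (Ggrp k) ((alt_group (2 ^ k))\<lparr>carrier := H\<rparr>)"
    unfolding hom_def Ggrp_def by (auto simp: H_def alt_group_mult mult)
  have bij: "bij_betw (phi k) (Gset k) H" unfolding bij_betw_def H_def using injG by simp
  have "phi k \<in> iso (Ggrp k) ((alt_group (2 ^ k))\<lparr>carrier := H\<rparr>)"
    unfolding iso_def using hom bij by (simp add: Ggrp_def)
  then show ?thesis using syl is_isoI by blast
qed

end
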